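(* Suppose Assumption A holds, $x^\star$ is the weak-Minty solution of A(d), and (VrFRBS) uses estimators in class (B) with parameters $\tau,\kappa,\Theta,\hat\Theta,\{\delta_k\},\{\Delta_k\}$. With the convention $y^{-1}:=x^0$, let $$\mathcal Q_k:=\|y^k-x^\star\|^2+\tfrac34\|y^k-x^{k-1}\|^2+\tfrac12\|x^{k-1}-y^{k-1}\|^2+\tfrac{2\eta(1-\tau)}{\tau}\langle e^{k-1},x^\star-y^{k-1}\rangle$$ (i.e. $\gamma=\frac1{4\eta}$, $c_1=\frac{4\eta}{\tau}$ in the general definition) and $$\mathcal L_k:=\mathcal Q_k+\tfrac{\hat\Theta\eta^2}{\kappa}\big(\tfrac{12}{\tau^2}+10\big)\|x^{k-1}-x^{k-2}\|^2+\tfrac{(1-\kappa)\eta^2}{\kappa}\big(\tfrac{12}{\tau^2}+10\big)\Delta_{k-1}+\tfrac{8(1-\tau)^2\eta^2}{\tau^2}\|e^{k-1}\|^2 .$$ Then for all $k\ge0$, almost surely $$\begin{aligned}\mathbb E_k[\mathcal L_{k+1}]\le{}&\mathcal L_k-\Big[\tfrac14-\tfrac{4\rho}{\eta}-\tfrac{L^2\eta}{2}(33\eta+16\rho)\Big]\|y^k-x^k\|^2-\Big[\tfrac14-\tfrac{L^2\eta}{2}(33\eta+16\rho)\Big]\|y^k-x^{k-1}\|^2-\tfrac{8(1-\tau)^2\eta^2}{\tau^2}\|e^{k-1}\|^2\\&-\eta^2\Big[4L^2-\big(\tfrac{12}{\tau^2}+10\big)\tfrac{\Theta+\hat\Theta}{\kappa}\Big]\|x^k-x^{k-1}\|^2+\big(\tfrac{12}{\tau^2}+10\big)\tfrac{\eta^2\delta_k}{\kappa},\end{aligned}$$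 and $\mathcal L_k\ge\frac34\|y^k-x^\star\|^2$ almost surely.
   Context: Setting: $G:\mathbb{R}^p\to\mathbb{R}^p$, $T:\mathbb{R}^p\rightrightarrows\mathbb{R}^p$, $\Phi:=G+T$, $\mathrm{zer}\,\Phi:=\{x:0\in Gx+Tx\}$, $J_{\eta T}:=(\mathbb{I}+\eta T)^{-1}$; (E) $Gx=\mathbb{E}_{\zeta\sim\mathbb P}[\mathbf G(x,\zeta)]$ or (F) $Gx=\frac1n\sum_{i=1}^nG_ix$. Assumption A: (a) $\mathrm{zer}\,\Phi\neq\emptyset$; (b) in (E), $\mathbb{E}_\zeta\|\mathbf G(x,\zeta)-Gx\|^2\le\sigma^2$; (c) in (E), $\mathbb{E}_\zeta\|\mathbf G(x,\zeta)-\mathbf G(y,\zeta)\|^2\le L^2\|x-y\|^2$, in (F), $\frac1n\sum_i\|G_ix-G_iy\|^2\le L^2\|x-y\|^2$ (so $G$ is $L$-Lipschitz); (d) there exist $\rho\ge0$ and $x^\star\in\mathrm{zer}\,\Phi$ with $\langle Gx+v,x-x^\star\rangle\ge-\rho\|Gx+v\|^2$ for all $(x,v)\in\mathrm{gra}\,T$. Scheme (VrFRBS): stepsize $\eta>0$, $x^0$, $x^{-2}=x^{-1}=x^0$, $\xi^0\in Tx^0$; for $k\ge0$: $S^k:=2Gx^k-Gx^{k-1}$, estimator $\widetilde S^k$, $x^{k+1}\in J_{\eta T}(x^k-\eta\widetilde S^k)$, $\xi^{k+1}:=\eta^{-1}(x^k-\eta\widetilde S^k-x^{k+1})\in Tx^{k+1}$.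 Notation: $e^k:=\widetilde S^k-S^k$, $\hat w^k:=Gx^{k-1}+\xi^k$, $y^k:=x^k+\eta\hat w^k$. $\mathcal F_k$: $\sigma$-algebra of all randomness up to iteration $k$; $\mathbb E_k[\cdot]:=\mathbb E[\cdot\mid\mathcal F_k]$. Class (B): there exist nonnegative random variables $\Delta_k$ ($\Delta_{-1}:=0$), $\tau,\kappa\in(0,1]$, $\Theta,\hat\Theta\ge0$, nonnegative $\{\delta_k\}$ such that with $e^{-1}:=0$, a.s. for all $k\ge0$: $\mathbb E_k[e^k]=(1-\tau)e^{k-1}$; $\mathbb E_k\|e^k\|^2\le\mathbb E_k[\Delta_k]$; $\mathbb E_k[\Delta_k]\le(1-\kappa)\Delta_{k-1}+\Theta\|x^k-x^{k-1}\|^2+\hat\Theta\|x^{k-1}-x^{k-2}\|^2+\delta_k$. *)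

theory Defs
  imports "HOL-Probability.Probability"
begin

definition resolvent :: "real \<Rightarrow> ('a::real_vector \<Rightarrow> 'a set) \<Rightarrow> 'a \<Rightarrow> 'a set" where
  "resolvent \<eta> T z = {u. \<exists>v\<in>T u. z = u + \<eta> *\<^sub>R v}"

definition assmA_E :: "('a::euclidean_space \<Rightarrow> 'a) \<Rightarrow> 'z measure \<Rightarrow> ('a \<Rightarrow> 'z \<Rightarrow> 'a)
    \<Rightarrow> real \<Rightarrow> real \<Rightarrow> bool" where
  "assmA_E G P GG \<sigma> L \<longleftrightarrow>
     prob_space P \<and>
     (\<forall>x. integrable P (GG x) \<and> G x = (\<integral>\<zeta>. GG x \<zeta> \<partial>P)) \<and>
     (\<forall>x. (\<integral>\<^sup>+\<zeta>. ennreal ((norm (GG x \<zeta> - G x))\<^sup>2) \<partial>P) \<le> ennreal (\<sigma>\<^sup>2)) \<and>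
     (\<forall>x y. (\<integral>\<^sup>+\<zeta>. ennreal ((norm (GG x \<zeta> - GG y \<zeta>))\<^sup>2) \<partial>P) \<le> ennreal (L\<^sup>2 * (norm (x - y))\<^sup>2))"

definition assmA_F :: "('a::euclidean_space \<Rightarrow> 'a) \<Rightarrow> nat \<Rightarrow> (nat \<Rightarrow> 'a \<Rightarrow> 'a) \<Rightarrow> real \<Rightarrow> bool" where
  "assmA_F G n Gi L \<longleftrightarrow>
     n \<ge> 1 \<and>
     (\<forall>x. G x = (1 / real n) *\<^sub>R (\<Sum>i<n. Gi i x)) \<and>
     (\<forall>x y. (1 / real n) * (\<Sum>i<n. (norm (Gi i x - Gi i y))\<^sup>2) \<le> L\<^sup>2 * (norm (x - y))\<^sup>2)"

definition weak_minty :: "('a::real_inner \<Rightarrow> 'a) \<Rightarrow> ('a \<Rightarrow> 'a set) \<Rightarrow> real \<Rightarrow> 'a \<Rightarrow> bool" where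
  "weak_minty G T \<rho> xs \<longleftrightarrow>
     \<rho> \<ge> 0 \<and> (\<exists>v\<in>T xs. G xs + v = 0) \<and>
     (\<forall>x v. v \<in> T x \<longrightarrow> inner (G x + v) (x - xs) \<ge> - \<rho> * (norm (G x + v))\<^sup>2)"

(* Index conventions: sequences are indexed by nat; x (k - 1) with truncated
   subtraction realises x^{-1} = x^{-2} = x^0. *)

definition yv :: "real \<Rightarrow> ('a::real_normed_vector \<Rightarrow> 'a) \<Rightarrow> (nat \<Rightarrow> 'w \<Rightarrow> 'a)
    \<Rightarrow> (nat \<Rightarrow> 'w \<Rightarrow> 'a) \<Rightarrow> nat \<Rightarrow> 'w \<Rightarrow> 'a" where
  "yv \<eta> G x \<xi> k \<omega> = x k \<omega> + \<eta> *\<^sub>R (G (x (k - 1) \<omega>) + \<xi> k \<omega>)"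

definition yprev :: "real \<Rightarrow> ('a::real_normed_vector \<Rightarrow> 'a) \<Rightarrow> (nat \<Rightarrow> 'w \<Rightarrow> 'a)
    \<Rightarrow> (nat \<Rightarrow> 'w \<Rightarrow> 'a) \<Rightarrow> nat \<Rightarrow> 'w \<Rightarrow> 'a" where
  "yprev \<eta> G x \<xi> k \<omega> = (if k = 0 then x 0 \<omega> else yv \<eta> G x \<xi> (k - 1) \<omega>)"

definition errv :: "('a::real_normed_vector \<Rightarrow> 'a) \<Rightarrow> (nat \<Rightarrow> 'w \<Rightarrow> 'a)
    \<Rightarrow> (nat \<Rightarrow> 'w \<Rightarrow> 'a) \<Rightarrow> nat \<Rightarrow> 'w \<Rightarrow> 'a" where
  "errv G x St k \<omega> = St k \<omega> - (2 *\<^sub>R G (x k \<omega>) - G (x (k - 1) \<omega>))"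

definition eprev :: "('a::real_normed_vector \<Rightarrow> 'a) \<Rightarrow> (nat \<Rightarrow> 'w \<Rightarrow> 'a)
    \<Rightarrow> (nat \<Rightarrow> 'w \<Rightarrow> 'a) \<Rightarrow> nat \<Rightarrow> 'w \<Rightarrow> 'a" where
  "eprev G x St k \<omega> = (if k = 0 then 0 else errv G x St (k - 1) \<omega>)"

definition Dprev :: "(nat \<Rightarrow> 'w \<Rightarrow> real) \<Rightarrow> nat \<Rightarrow> 'w \<Rightarrow> real" where
  "Dprev \<Delta> k \<omega> = (if k = 0 then 0 else \<Delta> (k - 1) \<omega>)"

definition classB :: "'w measure \<Rightarrow> (nat \<Rightarrow> 'w measure) \<Rightarrow> ('a::euclidean_space \<Rightarrow> 'a)
    \<Rightarrow> (nat \<Rightarrow> 'w \<Rightarrow> 'a) \<Rightarrow> (nat \<Rightarrow> 'w \<Rightarrow> 'a) \<Rightarrow> (nat \<Rightarrow> 'w \<Rightarrow> real)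
    \<Rightarrow> real \<Rightarrow> real \<Rightarrow> real \<Rightarrow> real \<Rightarrow> (nat \<Rightarrow> real) \<Rightarrow> bool" where
  "classB M F G x St \<Delta> \<tau> \<kappa> \<Theta> \<Theta>h \<delta> \<longleftrightarrow>
     0 < \<tau> \<and> \<tau> \<le> 1 \<and> 0 < \<kappa> \<and> \<kappa> \<le> 1 \<and> \<Theta> \<ge> 0 \<and> \<Theta>h \<ge> 0 \<and>
     (\<forall>k. \<delta> k \<ge> 0) \<and>
     (\<forall>k. \<Delta> k \<in> borel_measurable M \<and> (\<forall>\<omega>\<in>space M. \<Delta> k \<omega> \<ge> 0)) \<and>
     (\<forall>k. \<forall>b\<in>Basis. AE \<omega> in M.
        real_cond_exp M (F k) (\<lambda>\<omega>. errv G x St k \<omega> \<bullet> b) \<omega> = (1 - \<tau>) * (eprev G x St k \<omega> \<bullet> b)) \<and>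
     (\<forall>k. AE \<omega> in M.
        real_cond_exp M (F k) (\<lambda>\<omega>. (norm (errv G x St k \<omega>))\<^sup>2) \<omega> \<le> real_cond_exp M (F k) (\<Delta> k) \<omega>) \<and>
     (\<forall>k. AE \<omega> in M.
        real_cond_exp M (F k) (\<Delta> k) \<omega> \<le> (1 - \<kappa>) * Dprev \<Delta> k \<omega>
           + \<Theta> * (norm (x k \<omega> - x (k - 1) \<omega>))\<^sup>2
           + \<Theta>h * (norm (x (k - 1) \<omega> - x (k - 2) \<omega>))\<^sup>2 + \<delta> k)"

definition Qk :: "real \<Rightarrow> real \<Rightarrow> ('a::real_inner \<Rightarrow> 'a) \<Rightarrow> (nat \<Rightarrow> 'w \<Rightarrow> 'a) \<Rightarrow> (nat \<Rightarrow> 'w \<Rightarrow> 'a)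
    \<Rightarrow> (nat \<Rightarrow> 'w \<Rightarrow> 'a) \<Rightarrow> 'a \<Rightarrow> nat \<Rightarrow> 'w \<Rightarrow> real" where
  "Qk \<eta> \<tau> G x \<xi> St xs k \<omega> =
     (norm (yv \<eta> G x \<xi> k \<omega> - xs))\<^sup>2
     + 3/4 * (norm (yv \<eta> G x \<xi> k \<omega> - x (k - 1) \<omega>))\<^sup>2
     + 1/2 * (norm (x (k - 1) \<omega> - yprev \<eta> G x \<xi> k \<omega>))\<^sup>2
     + 2 * \<eta> * (1 - \<tau>) / \<tau> * inner (eprev G x St k \<omega>) (xs - yprev \<eta> G x \<xi> k \<omega>)"

definition Lk :: "real \<Rightarrow> real \<Rightarrow> real \<Rightarrow> real \<Rightarrow> ('a::real_inner \<Rightarrow> 'a) \<Rightarrow> (nat \<Rightarrow> 'w \<Rightarrow> 'a)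
    \<Rightarrow> (nat \<Rightarrow> 'w \<Rightarrow> 'a) \<Rightarrow> (nat \<Rightarrow> 'w \<Rightarrow> 'a) \<Rightarrow> (nat \<Rightarrow> 'w \<Rightarrow> real) \<Rightarrow> 'a \<Rightarrow> nat \<Rightarrow> 'w \<Rightarrow> real" where
  "Lk \<eta> \<tau> \<kappa> \<Theta>h G x \<xi> St \<Delta> xs k \<omega> =
     Qk \<eta> \<tau> G x \<xi> St xs k \<omega>
     + \<Theta>h * \<eta>\<^sup>2 / \<kappa> * (12 / \<tau>\<^sup>2 + 10) * (norm (x (k - 1) \<omega> - x (k - 2) \<omega>))\<^sup>2
     + (1 - \<kappa>) * \<eta>\<^sup>2 / \<kappa> * (12 / \<tau>\<^sup>2 + 10) * Dprev \<Delta> k \<omega>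
     + 8 * (1 - \<tau>)\<^sup>2 * \<eta>\<^sup>2 / \<tau>\<^sup>2 * (norm (eprev G x St k \<omega>))\<^sup>2"

end

theory Submission
  imports Defs
begin
definition L2M :: "'w measure \<Rightarrow> ('w \<Rightarrow> 'a::euclidean_space) \<Rightarrow> bool" where
  "L2M M f \<longleftrightarrow> f \<in> borel_measurable M \<and> integrable M (\<lambda>\<omega>. (norm (f \<omega>))\<^sup>2)"

lemma L2M_add:
  assumes "L2M M f" "L2M M g" shows "L2M M (\<lambda>\<omega>. f \<omega> + g \<omega>)"
proof -
  have [measurable]: "f \<in> borel_measurable M" "g \<in> borel_measurable M" using assms by (auto simp: L2M_def)
  have i: "integrable M (\<lambda>\<omega>. 2 * (norm (f \<omega>))\<^sup>2 + 2 * (norm (g \<omega>))\<^sup>2)" using assms by (auto simp: L2M_def)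
  have int1: "integrable M (\<lambda>\<omega>. (norm (f \<omega> + g \<omega>))\<^sup>2)"
  proof (rule Bochner_Integration.integrable_bound[OF i])
    show "(\<lambda>\<omega>. (norm (f \<omega> + g \<omega>))\<^sup>2) \<in> borel_measurable M" by measurable
    show "AE \<omega> in M. norm ((norm (f \<omega> + g \<omega>))\<^sup>2) \<le> norm (2 * (norm (f \<omega>))\<^sup>2 + 2 * (norm (g \<omega>))\<^sup>2)"
    proof (rule AE_I2)
      fix \<omega>
      have "norm (f \<omega> + g \<omega>) \<le> norm (f \<omega>) + norm (g \<omega>)" by (rule norm_triangle_ineq)
      hence "(norm (f \<omega> + g \<omega>))\<^sup>2 \<le> (norm (f \<omega>) + norm (g \<omega>))\<^sup>2" by (simp add: power_mono)
      also have "\<dots> \<le> 2 * (norm (f \<omega>))\<^sup>2 + 2 * (norm (g \<omega>))\<^sup>2"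
        using sum_squares_bound[of "norm (f \<omega>)" "norm (g \<omega>)"] by (simp add: power2_eq_square algebra_simps)
      finally show "norm ((norm (f \<omega> + g \<omega>))\<^sup>2) \<le> norm (2 * (norm (f \<omega>))\<^sup>2 + 2 * (norm (g \<omega>))\<^sup>2)" by simp
    qed
  qed
  show ?thesis unfolding L2M_def by (intro conjI) (measurable, rule int1)
qed

lemma L2M_scale:
  assumes "L2M M f" shows "L2M M (\<lambda>\<omega>. c *\<^sub>R f \<omega>)"
proof -
  have [measurable]: "f \<in> borel_measurable M" using assms by (auto simp: L2M_def)
  have "integrable M (\<lambda>\<omega>. c\<^sup>2 * (norm (f \<omega>))\<^sup>2)" using assms by (auto simp: L2M_def)
  moreover have "(\<lambda>\<omega>. (norm (c *\<^sub>R f \<omega>))\<^sup>2) = (\<lambda>\<omega>. c\<^sup>2 * (norm (f \<omega>))\<^sup>2)"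
    by (simp add: power_mult_distrib)
  ultimately show ?thesis unfolding L2M_def by simp
qed

lemma L2M_diff:
  assumes "L2M M f" "L2M M g" shows "L2M M (\<lambda>\<omega>. f \<omega> - g \<omega>)"
  using L2M_add[OF assms(1) L2M_scale[OF assms(2), of "-1"]] by simp

lemma L2M_const:
  assumes "finite_measure M" shows "L2M M (\<lambda>\<omega>. c)"
proof -
  interpret finite_measure M by fact
  show ?thesis unfolding L2M_def by simp
qed

lemma L2M_cong:
  assumes "L2M M f" "\<And>\<omega>. f \<omega> = g \<omega>" shows "L2M M g"
proof -
  have "f = g" using assms(2) by auto
  then show ?thesis using assms(1) by simp
qed

lemma L2M_comp:
  assumes fm: "finite_measure M" and Gm: "G \<in> borel_measurable borel"
    and lip: "\<forall>u v. (norm (G u - G v))\<^sup>2 \<le> L\<^sup>2 * (norm (u - v))\<^sup>2" and f: "L2M M f"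
  shows "L2M M (\<lambda>\<omega>. G (f \<omega>))"
proof -
  have [measurable]: "f \<in> borel_measurable M" "G \<in> borel_measurable borel" using f Gm by (auto simp: L2M_def)
  have i: "integrable M (\<lambda>\<omega>. L\<^sup>2 * (norm (f \<omega>))\<^sup>2)" using f by (auto simp: L2M_def)
  have int1: "integrable M (\<lambda>\<omega>. (norm (G (f \<omega>) - G 0))\<^sup>2)"
  proof (rule Bochner_Integration.integrable_bound[OF i])
    show "(\<lambda>\<omega>. (norm (G (f \<omega>) - G 0))\<^sup>2) \<in> borel_measurable M" by measurable
    show "AE \<omega> in M. norm ((norm (G (f \<omega>) - G 0))\<^sup>2) \<le> norm (L\<^sup>2 * (norm (f \<omega>))\<^sup>2)"
    proof (rule AE_I2)
      fix \<omega>
      have "(norm (G (f \<omega>) - G 0))\<^sup>2 \<le> L\<^sup>2 * (norm (f \<omega> - 0))\<^sup>2" using lip by blast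
      then show "norm ((norm (G (f \<omega>) - G 0))\<^sup>2) \<le> norm (L\<^sup>2 * (norm (f \<omega>))\<^sup>2)" by simp
    qed
  qed
  have "L2M M (\<lambda>\<omega>. G (f \<omega>) - G 0)" unfolding L2M_def by (intro conjI) (measurable, rule int1)
  from L2M_add[OF this L2M_const[OF fm, of "G 0"]] show ?thesis by simp
qed

lemma L2M_inner:
  assumes "L2M M f" "L2M M g" shows "integrable M (\<lambda>\<omega>. inner (f \<omega>) (g \<omega>))"
proof -
  have [measurable]: "f \<in> borel_measurable M" "g \<in> borel_measurable M" using assms by (auto simp: L2M_def)
  have i: "integrable M (\<lambda>\<omega>. (norm (f \<omega>))\<^sup>2 + (norm (g \<omega>))\<^sup>2)" using assms by (auto simp: L2M_def)
  show ?thesis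
  proof (rule Bochner_Integration.integrable_bound[OF i])
    show "(\<lambda>\<omega>. inner (f \<omega>) (g \<omega>)) \<in> borel_measurable M" by measurable
    show "AE \<omega> in M. norm (inner (f \<omega>) (g \<omega>)) \<le> norm ((norm (f \<omega>))\<^sup>2 + (norm (g \<omega>))\<^sup>2)"
    proof (rule AE_I2)
      fix \<omega>
      have "\<bar>inner (f \<omega>) (g \<omega>)\<bar> \<le> norm (f \<omega>) * norm (g \<omega>)" by (rule Cauchy_Schwarz_ineq2)
      also have "\<dots> \<le> (norm (f \<omega>))\<^sup>2 + (norm (g \<omega>))\<^sup>2"
      proof -
        have "0 \<le> norm (f \<omega>) * norm (g \<omega>)" by simp
        moreover have "2 * norm (f \<omega>) * norm (g \<omega>) \<le> (norm (f \<omega>))\<^sup>2 + (norm (g \<omega>))\<^sup>2"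
          by (rule sum_squares_bound)
        ultimately show ?thesis by linarith
      qed
      finally show "norm (inner (f \<omega>) (g \<omega>)) \<le> norm ((norm (f \<omega>))\<^sup>2 + (norm (g \<omega>))\<^sup>2)" by simp
    qed
  qed
qed

lemma L2M_coord_prod:
  assumes "L2M M f" "L2M M g" shows "integrable M (\<lambda>\<omega>. inner (f \<omega>) b * inner (g \<omega>) b)"
proof -
  have "L2M M (\<lambda>\<omega>. inner (f \<omega>) b *\<^sub>R b)" 
  proof -
    have [measurable]: "f \<in> borel_measurable M" using assms by (auto simp: L2M_def)
    have i: "integrable M (\<lambda>\<omega>. (norm b)\<^sup>2 * (norm b)\<^sup>2 * (norm (f \<omega>))\<^sup>2)" using assms by (auto simp: L2M_def)
    have int1: "integrable M (\<lambda>\<omega>. (norm (inner (f \<omega>) b *\<^sub>R b))\<^sup>2)"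
    proof (rule Bochner_Integration.integrable_bound[OF i])
      show "(\<lambda>\<omega>. (norm (inner (f \<omega>) b *\<^sub>R b))\<^sup>2) \<in> borel_measurable M" by measurable
      show "AE \<omega> in M. norm ((norm (inner (f \<omega>) b *\<^sub>R b))\<^sup>2) \<le> norm ((norm b)\<^sup>2 * (norm b)\<^sup>2 * (norm (f \<omega>))\<^sup>2)"
      proof (rule AE_I2)
        fix \<omega>
        have c: "\<bar>inner (f \<omega>) b\<bar> \<le> norm (f \<omega>) * norm b" by (rule Cauchy_Schwarz_ineq2)
        have "(norm (inner (f \<omega>) b *\<^sub>R b))\<^sup>2 = (inner (f \<omega>) b)\<^sup>2 * (norm b)\<^sup>2" by (simp add: power_mult_distrib)
        also have "\<dots> \<le> (norm (f \<omega>) * norm b)\<^sup>2 * (norm b)\<^sup>2"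
        proof (rule mult_right_mono)
          have "\<bar>inner (f \<omega>) b\<bar>\<^sup>2 \<le> (norm (f \<omega>) * norm b)\<^sup>2" by (rule power_mono[OF c abs_ge_zero])
          then show "(inner (f \<omega>) b)\<^sup>2 \<le> (norm (f \<omega>) * norm b)\<^sup>2" by simp
        qed simp
        finally show "norm ((norm (inner (f \<omega>) b *\<^sub>R b))\<^sup>2) \<le> norm ((norm b)\<^sup>2 * (norm b)\<^sup>2 * (norm (f \<omega>))\<^sup>2)"
          by (simp add: power_mult_distrib algebra_simps)
      qed
    qed
    show ?thesis unfolding L2M_def by (intro conjI) (measurable, rule int1)
  qed
  from L2M_inner[OF this assms(2)] show ?thesis by (simp add: inner_commute)
qed

lemma L2M_coord:
  assumes fm: "finite_measure M" and f: "L2M M f" shows "integrable M (\<lambda>\<omega>. inner (f \<omega>) b)"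
  using L2M_inner[OF f L2M_const[OF fm, of b]] by simp


lemma core_scalar:
  fixes \<eta> \<tau> \<rho> L rr hh gg qq mm EE rh rg hg qh Er Eh Eg Eq Em :: real
  assumes eta: "\<eta> > 0" and tau: "\<tau> > 0" "\<tau> \<le> 1" and rho: "\<rho> \<ge> 0"
    and SM: "0 \<le> (rh/\<eta> - hh/\<eta> + rg - hg) + \<rho> * (hh/\<eta>\<^sup>2 + 2*hg/\<eta> + gg)"
    and SL: "gg \<le> L\<^sup>2 * (qq - 2*qh + hh)"
    and Y1: "0 \<le> 2*((1-\<tau>)*\<eta>)\<^sup>2/\<tau>\<^sup>2*EE + 2*((1-\<tau>)*\<eta>)/\<tau>*Em + mm/2"
    and Y2: "0 \<le> 2*((1-\<tau>)*\<eta>)\<^sup>2/\<tau>\<^sup>2*EE + 2*((1-\<tau>)*\<eta>)/\<tau>*Eq + qq/2"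
    and Y3: "0 \<le> 4*((1-\<tau>)*\<eta>)\<^sup>2*EE - 2*((1-\<tau>)*\<eta>)*Eh + hh/4"
    and Y4: "0 \<le> 49/4*((1-\<tau>)*\<eta>)\<^sup>2*EE - 7/2*((1-\<tau>)*\<eta>)*\<eta>*Eg + \<eta>\<^sup>2*gg/4"
    and P1: "0 \<le> hh/\<eta>\<^sup>2 - 2*hg/\<eta> + gg"
    and P2: "0 \<le> qq + 2*qh + hh"
    and EE: "EE \<ge> 0" and hh: "hh \<ge> 0" and qq: "qq \<ge> 0"
  shows "(rr + hh + \<eta>\<^sup>2*gg - 2*rh - 2*\<eta>*rg + 2*\<eta>*hg) + 3/4*(\<eta>\<^sup>2*gg) + 1/2*hh
          + (1-\<tau>) * (-2*\<eta>/\<tau>*Er + 2*\<eta>*Eh + 7/2*\<eta>\<^sup>2*Eg)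
          - \<eta>\<^sup>2*(4/\<tau>\<^sup>2+16/\<tau>+1/4)*(1-\<tau>)\<^sup>2*EE
        \<le> rr + 3/4*qq + 1/2*mm + 2*\<eta>*(1-\<tau>)/\<tau>*(-Er + Eq + Em)
          - (1/4 - 4*\<rho>/\<eta> - L\<^sup>2*\<eta>/2*(33*\<eta>+16*\<rho>))*hh
          - (1/4 - L\<^sup>2*\<eta>/2*(33*\<eta>+16*\<rho>))*qq
          - 4*L\<^sup>2*\<eta>\<^sup>2*(qq - 2*qh + hh)" (is "?l \<le> ?r")
proof -
  define a where "a = (1-\<tau>)*\<eta>"
  have id: "?r - ?l = 2*\<eta>*((rh/\<eta> - hh/\<eta> + rg - hg) + \<rho> * (hh/\<eta>\<^sup>2 + 2*hg/\<eta> + gg))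
     + (2*a\<^sup>2/\<tau>\<^sup>2*EE + 2*a/\<tau>*Em + mm/2) + (2*a\<^sup>2/\<tau>\<^sup>2*EE + 2*a/\<tau>*Eq + qq/2)
     + (4*a\<^sup>2*EE - 2*a*Eh + hh/4) + (49/4*a\<^sup>2*EE - 7/2*a*\<eta>*Eg + \<eta>\<^sup>2*gg/4)
     + 2*\<eta>*\<rho>*(hh/\<eta>\<^sup>2 - 2*hg/\<eta> + gg) + 16*a\<^sup>2*(1-\<tau>)/\<tau>*EE
     + (2*\<eta>\<^sup>2+4*\<eta>*\<rho>)*(L\<^sup>2 * (qq - 2*qh + hh) - gg) + L\<^sup>2*(6*\<eta>\<^sup>2+4*\<eta>*\<rho>)*(qq + 2*qh + hh)
     + 9/2*L\<^sup>2*\<eta>\<^sup>2*(hh+qq)"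
    using eta tau unfolding a_def by (simp add: field_simps power2_eq_square)
  have "0 \<le> 2*\<eta>*((rh/\<eta> - hh/\<eta> + rg - hg) + \<rho> * (hh/\<eta>\<^sup>2 + 2*hg/\<eta> + gg))" using SM eta by simp
  moreover have "0 \<le> 2*\<eta>*\<rho>*(hh/\<eta>\<^sup>2 - 2*hg/\<eta> + gg)" using P1 eta rho by simp
  moreover have "0 \<le> 16*a\<^sup>2*(1-\<tau>)/\<tau>*EE" using tau EE by simp
  moreover have "0 \<le> (2*\<eta>\<^sup>2+4*\<eta>*\<rho>)*(L\<^sup>2 * (qq - 2*qh + hh) - gg)" using SL eta rho by simp
  moreover have "0 \<le> L\<^sup>2*(6*\<eta>\<^sup>2+4*\<eta>*\<rho>)*(qq + 2*qh + hh)" using P2 eta rho by simp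
  moreover have "0 \<le> 9/2*L\<^sup>2*\<eta>\<^sup>2*(hh+qq)" using hh qq by simp
  ultimately have "0 \<le> ?r - ?l" unfolding id using Y1 Y2 Y3 Y4 unfolding a_def by linarith
  then show ?thesis by (simp only: diff_ge_0_iff_ge)
qed

lemma core_vec:
  fixes X Xp Y Yp E xs g :: "'a::real_inner" and \<eta> \<tau> \<rho> L :: real
  assumes eta: "\<eta> > 0" and tau: "\<tau> > 0" "\<tau> \<le> 1" and rho: "\<rho> \<ge> 0"
    and lip: "(norm g)\<^sup>2 \<le> L\<^sup>2 * (norm (X - Xp))\<^sup>2"
    and minty: "inner ((1/\<eta>) *\<^sub>R (Y - X) + g) (X - xs) \<ge> - \<rho> * (norm ((1/\<eta>) *\<^sub>R (Y - X) + g))\<^sup>2"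
  shows "(norm (X - \<eta> *\<^sub>R g - xs))\<^sup>2 + 3/4*(norm (X - \<eta> *\<^sub>R g - X))\<^sup>2 + 1/2*(norm (X - Y))\<^sup>2
          + (1-\<tau>) * inner ((-2*\<eta>) *\<^sub>R (X - \<eta> *\<^sub>R g - xs) - (3/2*\<eta>) *\<^sub>R (X - \<eta> *\<^sub>R g - X)
                + (2*\<eta>*(1-\<tau>)/\<tau>) *\<^sub>R (xs - Y)) E
          - \<eta>\<^sup>2*(4/\<tau>\<^sup>2+16/\<tau>+1/4)*(1-\<tau>)\<^sup>2*(norm E)\<^sup>2
        \<le> (norm (Y - xs))\<^sup>2 + 3/4*(norm (Y - Xp))\<^sup>2 + 1/2*(norm (Xp - Yp))\<^sup>2
          + 2*\<eta>*(1-\<tau>)/\<tau> * inner E (xs - Yp)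
          - (1/4 - 4*\<rho>/\<eta> - L\<^sup>2*\<eta>/2*(33*\<eta>+16*\<rho>))*(norm (Y - X))\<^sup>2
          - (1/4 - L\<^sup>2*\<eta>/2*(33*\<eta>+16*\<rho>))*(norm (Y - Xp))\<^sup>2
          - 4*L\<^sup>2*\<eta>\<^sup>2*(norm (X - Xp))\<^sup>2"
proof -
  define r where "r = Y - xs"
  define h where "h = Y - X"
  define q where "q = Y - Xp"
  define m where "m = Xp - Yp"
  have X: "X = xs + r - h" and Y: "Y = xs + r" and Xp: "Xp = xs + r - q" and Yp: "Yp = xs + r - q - m"
    by (simp_all add: r_def h_def q_def m_def algebra_simps)
  define rr where "rr = inner r r"
  define hh where "hh = inner h h"
  define gg where "gg = inner g g"
  define qq where "qq = inner q q"
  define mm where "mm = inner m m"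
  define EE where "EE = inner E E"
  define rh where "rh = inner r h"
  define rg where "rg = inner r g"
  define hg where "hg = inner h g"
  define qh where "qh = inner q h"
  define Er where "Er = inner E r"
  define Eh where "Eh = inner E h"
  define Eg where "Eg = inner E g"
  define Eq where "Eq = inner E q"
  define Em where "Em = inner E m"
  note defs = rr_def hh_def gg_def qq_def mm_def EE_def rh_def rg_def hg_def qh_def Er_def Eh_def Eg_def Eq_def Em_def
  note ex = defs power2_norm_eq_inner inner_simps inner_commute algebra_simps
  have e1: "(norm (X - \<eta> *\<^sub>R g - xs))\<^sup>2 = rr + hh + \<eta>\<^sup>2*gg - 2*rh - 2*\<eta>*rg + 2*\<eta>*hg"
    unfolding X power2_norm_eq_inner by (simp add: ex power2_eq_square)
  have e2: "(norm (X - \<eta> *\<^sub>R g - X))\<^sup>2 = \<eta>\<^sup>2*gg"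
    unfolding power2_norm_eq_inner by (simp add: ex power2_eq_square)
  have e3: "(norm (X - Y))\<^sup>2 = hh" unfolding X Y by (simp add: ex)
  have e4: "inner ((-2*\<eta>) *\<^sub>R (X - \<eta> *\<^sub>R g - xs) - (3/2*\<eta>) *\<^sub>R (X - \<eta> *\<^sub>R g - X)
                + (2*\<eta>*(1-\<tau>)/\<tau>) *\<^sub>R (xs - Y)) E = -2*\<eta>/\<tau>*Er + 2*\<eta>*Eh + 7/2*\<eta>\<^sup>2*Eg"
    unfolding X Y using tau by (simp add: ex power2_eq_square field_simps)
  have e5: "(norm E)\<^sup>2 = EE" by (simp add: ex)
  have e6: "(norm (Y - xs))\<^sup>2 = rr" unfolding Y by (simp add: ex)
  have e7: "(norm (Y - Xp))\<^sup>2 = qq" unfolding Y Xp by (simp add: ex)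
  have e8: "(norm (Xp - Yp))\<^sup>2 = mm" unfolding Yp Xp by (simp add: ex)
  have e9: "inner E (xs - Yp) = -Er + Eq + Em" unfolding Yp by (simp add: ex)
  have e10: "(norm (Y - X))\<^sup>2 = hh" unfolding X Y by (simp add: ex)
  have e11: "(norm (X - Xp))\<^sup>2 = qq - 2*qh + hh" unfolding X Xp by (simp add: ex)
  have SM: "0 \<le> (rh/\<eta> - hh/\<eta> + rg - hg) + \<rho> * (hh/\<eta>\<^sup>2 + 2*hg/\<eta> + gg)"
  proof -
    have a: "inner ((1/\<eta>) *\<^sub>R (Y - X) + g) (X - xs) = rh/\<eta> - hh/\<eta> + rg - hg"
      unfolding X Y by (simp add: ex divide_simps)
    have b: "(norm ((1/\<eta>) *\<^sub>R (Y - X) + g))\<^sup>2 = hh/\<eta>\<^sup>2 + 2*hg/\<eta> + gg"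
      unfolding X Y power2_norm_eq_inner using eta unfolding power2_norm_eq_inner by (simp add: ex power2_eq_square divide_simps)
    show ?thesis using minty unfolding a b by linarith
  qed
  have SL: "gg \<le> L\<^sup>2 * (qq - 2*qh + hh)" using lip unfolding e11 by (simp add: ex)
  have Y1: "0 \<le> 2*((1-\<tau>)*\<eta>)\<^sup>2/\<tau>\<^sup>2*EE + 2*((1-\<tau>)*\<eta>)/\<tau>*Em + mm/2"
  proof -
    have "0 \<le> (norm ((2*(1-\<tau>)*\<eta>/\<tau>) *\<^sub>R E + m))\<^sup>2 / 2" by simp
    also have "\<dots> = 2*((1-\<tau>)*\<eta>)\<^sup>2/\<tau>\<^sup>2*EE + 2*((1-\<tau>)*\<eta>)/\<tau>*Em + mm/2"
      using tau unfolding power2_norm_eq_inner by (simp add: ex power2_eq_square divide_simps)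
    finally show ?thesis .
  qed
  have Y2: "0 \<le> 2*((1-\<tau>)*\<eta>)\<^sup>2/\<tau>\<^sup>2*EE + 2*((1-\<tau>)*\<eta>)/\<tau>*Eq + qq/2"
  proof -
    have "0 \<le> (norm ((2*(1-\<tau>)*\<eta>/\<tau>) *\<^sub>R E + q))\<^sup>2 / 2" by simp
    also have "\<dots> = 2*((1-\<tau>)*\<eta>)\<^sup>2/\<tau>\<^sup>2*EE + 2*((1-\<tau>)*\<eta>)/\<tau>*Eq + qq/2"
      using tau unfolding power2_norm_eq_inner by (simp add: ex power2_eq_square divide_simps)
    finally show ?thesis .
  qed
  have Y3: "0 \<le> 4*((1-\<tau>)*\<eta>)\<^sup>2*EE - 2*((1-\<tau>)*\<eta>)*Eh + hh/4"
  proof -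
    have "0 \<le> (norm ((2*(1-\<tau>)*\<eta>) *\<^sub>R E - (1/2) *\<^sub>R h))\<^sup>2" by simp
    also have "\<dots> = 4*((1-\<tau>)*\<eta>)\<^sup>2*EE - 2*((1-\<tau>)*\<eta>)*Eh + hh/4"
      unfolding power2_norm_eq_inner by (simp add: ex power2_eq_square divide_simps)
    finally show ?thesis .
  qed
  have Y4: "0 \<le> 49/4*((1-\<tau>)*\<eta>)\<^sup>2*EE - 7/2*((1-\<tau>)*\<eta>)*\<eta>*Eg + \<eta>\<^sup>2*gg/4"
  proof -
    have "0 \<le> (norm ((7/2*(1-\<tau>)*\<eta>) *\<^sub>R E - (\<eta>/2) *\<^sub>R g))\<^sup>2" by simp
    also have "\<dots> = 49/4*((1-\<tau>)*\<eta>)\<^sup>2*EE - 7/2*((1-\<tau>)*\<eta>)*\<eta>*Eg + \<eta>\<^sup>2*gg/4"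
      unfolding power2_norm_eq_inner by (simp add: ex power2_eq_square divide_simps)
    finally show ?thesis .
  qed
  have P1: "0 \<le> hh/\<eta>\<^sup>2 - 2*hg/\<eta> + gg"
  proof -
    have "0 \<le> (norm ((1/\<eta>) *\<^sub>R h - g))\<^sup>2" by simp
    also have "\<dots> = hh/\<eta>\<^sup>2 - 2*hg/\<eta> + gg"
      using eta unfolding power2_norm_eq_inner by (simp add: ex power2_eq_square divide_simps)
    finally show ?thesis .
  qed
  have P2: "0 \<le> qq + 2*qh + hh"
  proof -
    have "0 \<le> (norm (q + h))\<^sup>2" by simp
    also have "\<dots> = qq + 2*qh + hh" by (simp add: ex)
    finally show ?thesis .
  qed
  have EE: "EE \<ge> 0" and hh: "hh \<ge> 0" and qq: "qq \<ge> 0" by (simp_all add: defs)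
  show ?thesis unfolding e1 e2 e3 e4 e5 e6 e7 e8 e9 e10 e11
    by (rule core_scalar[OF eta tau rho SM SL Y1 Y2 Y3 Y4 P1 P2 EE hh qq])
qed



lemma (in sigma_finite_subalgebra) CE_inner:
  fixes V e Eb :: "'a \<Rightarrow> 'b::euclidean_space"
  assumes Vm: "V \<in> borel_measurable F" and V2: "L2M M V" and e2: "L2M M e"
    and ce: "\<forall>b\<in>Basis. AE \<omega> in M. real_cond_exp M F (\<lambda>\<omega>. e \<omega> \<bullet> b) \<omega> = c * (Eb \<omega> \<bullet> b)"
  shows "AE \<omega> in M. real_cond_exp M F (\<lambda>\<omega>. inner (V \<omega>) (e \<omega>)) \<omega> = c * inner (V \<omega>) (Eb \<omega>)"
proof -
  have [measurable]: "e \<in> borel_measurable M" using e2 by (simp add: L2M_def)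
  have eq: "(\<lambda>\<omega>. inner (V \<omega>) (e \<omega>)) = (\<lambda>\<omega>. \<Sum>b\<in>Basis. (V \<omega> \<bullet> b) * (e \<omega> \<bullet> b))"
    by (rule ext, rule euclidean_inner)
  have i: "\<And>b. integrable M (\<lambda>\<omega>. (V \<omega> \<bullet> b) * (e \<omega> \<bullet> b))"
    by (rule L2M_coord_prod[OF V2 e2])
  have s: "AE \<omega> in M. real_cond_exp M F (\<lambda>\<omega>. \<Sum>b\<in>Basis. (V \<omega> \<bullet> b) * (e \<omega> \<bullet> b)) \<omega>
      = (\<Sum>b\<in>Basis. real_cond_exp M F (\<lambda>\<omega>. (V \<omega> \<bullet> b) * (e \<omega> \<bullet> b)) \<omega>)"
    by (rule real_cond_exp_sum) (rule i)
  have m: "AE \<omega> in M. \<forall>b\<in>Basis. real_cond_exp M F (\<lambda>\<omega>. (V \<omega> \<bullet> b) * (e \<omega> \<bullet> b)) \<omega>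
      = (V \<omega> \<bullet> b) * real_cond_exp M F (\<lambda>\<omega>. e \<omega> \<bullet> b) \<omega>"
  proof (rule AE_finite_allI[OF finite_Basis])
    fix b :: 'b
    have [measurable]: "(\<lambda>\<omega>. V \<omega> \<bullet> b) \<in> borel_measurable F" using Vm by measurable
    show "AE \<omega> in M. real_cond_exp M F (\<lambda>\<omega>. (V \<omega> \<bullet> b) * (e \<omega> \<bullet> b)) \<omega>
      = (V \<omega> \<bullet> b) * real_cond_exp M F (\<lambda>\<omega>. e \<omega> \<bullet> b) \<omega>"
      by (rule real_cond_exp_mult) (measurable, rule i)
  qed
  have c: "AE \<omega> in M. \<forall>b\<in>Basis. real_cond_exp M F (\<lambda>\<omega>. e \<omega> \<bullet> b) \<omega> = c * (Eb \<omega> \<bullet> b)"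
    by (rule AE_finite_allI[OF finite_Basis]) (use ce in blast)
  show ?thesis
  proof (rule AE_mp[OF AE_conjI[OF s AE_conjI[OF m c]]], rule AE_I2, intro impI)
    fix \<omega> assume a: "real_cond_exp M F (\<lambda>\<omega>. \<Sum>b\<in>Basis. (V \<omega> \<bullet> b) * (e \<omega> \<bullet> b)) \<omega>
      = (\<Sum>b\<in>Basis. real_cond_exp M F (\<lambda>\<omega>. (V \<omega> \<bullet> b) * (e \<omega> \<bullet> b)) \<omega>) \<and>
      (\<forall>b\<in>Basis. real_cond_exp M F (\<lambda>\<omega>. (V \<omega> \<bullet> b) * (e \<omega> \<bullet> b)) \<omega>
      = (V \<omega> \<bullet> b) * real_cond_exp M F (\<lambda>\<omega>. e \<omega> \<bullet> b) \<omega>) \<and>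
      (\<forall>b\<in>Basis. real_cond_exp M F (\<lambda>\<omega>. e \<omega> \<bullet> b) \<omega> = c * (Eb \<omega> \<bullet> b))"
    have "real_cond_exp M F (\<lambda>\<omega>. inner (V \<omega>) (e \<omega>)) \<omega>
        = (\<Sum>b\<in>Basis. (V \<omega> \<bullet> b) * (c * (Eb \<omega> \<bullet> b)))"
      unfolding eq using a by simp
    also have "\<dots> = c * inner (V \<omega>) (Eb \<omega>)"
      unfolding euclidean_inner[of "V \<omega>" "Eb \<omega>"] sum_distrib_left by (simp add: algebra_simps)
    finally show "real_cond_exp M F (\<lambda>\<omega>. inner (V \<omega>) (e \<omega>)) \<omega> = c * inner (V \<omega>) (Eb \<omega>)" .
  qed
qed

lemma lower_vec:
  fixes Y xs Xp Yp E :: "'a::real_inner" and \<eta> \<tau> :: real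
  shows "3/4 * (norm (Y - xs))\<^sup>2 \<le> (norm (Y - xs))\<^sup>2 + 3/4*(norm (Y - Xp))\<^sup>2 + 1/2*(norm (Xp - Yp))\<^sup>2
          + 2*\<eta>*(1-\<tau>)/\<tau> * inner E (xs - Yp) + 8*(1-\<tau>)\<^sup>2*\<eta>\<^sup>2/\<tau>\<^sup>2*(norm E)\<^sup>2"
proof -
  define a where "a = \<eta>*(1-\<tau>)/\<tau>"
  define u1 where "u1 = xs - Y"
  define u2 where "u2 = Y - Xp"
  define u3 where "u3 = Xp - Yp"
  have sp: "xs - Yp = u1 + u2 + u3" by (simp add: u1_def u2_def u3_def)
  have n1: "(norm (Y - xs))\<^sup>2 = (norm u1)\<^sup>2" by (simp add: u1_def norm_minus_commute)
  have c1: "2*\<eta>*(1-\<tau>)/\<tau> = 2*a" by (simp add: a_def)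
  have c2: "8*(1-\<tau>)\<^sup>2*\<eta>\<^sup>2/\<tau>\<^sup>2 = 8*a\<^sup>2" by (simp add: a_def power_mult_distrib power_divide)
  have y1: "0 \<le> 4*a\<^sup>2*(norm E)\<^sup>2 + 2*a*inner E u1 + 1/4*(norm u1)\<^sup>2"
  proof -
    have "0 \<le> (norm ((2*a) *\<^sub>R E + (1/2) *\<^sub>R u1))\<^sup>2" by simp
    also have "\<dots> = 4*a\<^sup>2*(norm E)\<^sup>2 + 2*a*inner E u1 + 1/4*(norm u1)\<^sup>2"
      unfolding power2_norm_eq_inner by (simp add: inner_simps inner_commute algebra_simps power2_eq_square)
    finally show ?thesis .
  qed
  have y2: "0 \<le> 4/3*a\<^sup>2*(norm E)\<^sup>2 + 2*a*inner E u2 + 3/4*(norm u2)\<^sup>2"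
  proof -
    have "0 \<le> 3 * (norm ((2*a/3) *\<^sub>R E + (1/2) *\<^sub>R u2))\<^sup>2" by simp
    also have "\<dots> = 4/3*a\<^sup>2*(norm E)\<^sup>2 + 2*a*inner E u2 + 3/4*(norm u2)\<^sup>2"
      unfolding power2_norm_eq_inner by (simp add: inner_simps inner_commute algebra_simps power2_eq_square)
    finally show ?thesis .
  qed
  have y3: "0 \<le> 2*a\<^sup>2*(norm E)\<^sup>2 + 2*a*inner E u3 + 1/2*(norm u3)\<^sup>2"
  proof -
    have "0 \<le> 2 * (norm (a *\<^sub>R E + (1/2) *\<^sub>R u3))\<^sup>2" by simp
    also have "\<dots> = 2*a\<^sup>2*(norm E)\<^sup>2 + 2*a*inner E u3 + 1/2*(norm u3)\<^sup>2"
      unfolding power2_norm_eq_inner by (simp add: inner_simps inner_commute algebra_simps power2_eq_square)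
    finally show ?thesis .
  qed
  have ip: "inner E (xs - Yp) = inner E u1 + inner E u2 + inner E u3" unfolding sp by (simp add: inner_simps)
  define z where "z = a\<^sup>2*(norm E)\<^sup>2"
  have z0: "0 \<le> z" by (simp add: z_def)
  have e8: "8*a\<^sup>2*(norm E)\<^sup>2 = 8*z" and e4: "4*a\<^sup>2*(norm E)\<^sup>2 = 4*z" and e43: "4/3*a\<^sup>2*(norm E)\<^sup>2 = 4/3*z"
    and e2: "2*a\<^sup>2*(norm E)\<^sup>2 = 2*z" by (simp_all add: z_def)
  have e2a: "2*a*(inner E u1 + inner E u2 + inner E u3) = 2*a*inner E u1 + 2*a*inner E u2 + 2*a*inner E u3"
    by (simp add: algebra_simps)
  show ?thesis unfolding c1 c2 ip n1 u2_def[symmetric] u3_def[symmetric] e8 e2a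
    using y1 y2 y3 z0 unfolding e4 e43 e2 by linarith
qed

lemma final_scalar:
  fixes \<eta> \<tau> \<kappa> \<Theta> \<Theta>h L a1 a2 h1 h2 Aq ip s D Qv nE nXX nXpp Dp dk :: real
  assumes eta: "\<eta> > 0" and tau: "\<tau> > 0" and kap: "\<kappa> > 0"
    and core: "Aq + (1-\<tau>) * ip - \<eta>\<^sup>2*(4/\<tau>\<^sup>2+16/\<tau>+1/4)*(1-\<tau>)\<^sup>2*nE
        \<le> Qv - a1 * h1 - a2 * h2 - 4*L\<^sup>2*\<eta>\<^sup>2*nXX"
    and J: "(1-\<tau>)\<^sup>2 * nE \<le> s" and S: "s \<le> D"
    and R: "D \<le> (1-\<kappa>) * Dp + \<Theta> * nXX + \<Theta>h * nXpp + dk"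
  shows "Aq + \<Theta>h * \<eta>\<^sup>2 / \<kappa> * (12 / \<tau>\<^sup>2 + 10) * nXX + (1-\<tau>) * ip
          + (7/4*\<eta>\<^sup>2 + 8*(1-\<tau>)\<^sup>2*\<eta>\<^sup>2/\<tau>\<^sup>2) * s + (1 - \<kappa>) * \<eta>\<^sup>2 / \<kappa> * (12 / \<tau>\<^sup>2 + 10) * D
      \<le> Qv + \<Theta>h * \<eta>\<^sup>2 / \<kappa> * (12 / \<tau>\<^sup>2 + 10) * nXpp + (1 - \<kappa>) * \<eta>\<^sup>2 / \<kappa> * (12 / \<tau>\<^sup>2 + 10) * Dp
          + 8 * (1 - \<tau>)\<^sup>2 * \<eta>\<^sup>2 / \<tau>\<^sup>2 * nE
          - a1 * h1 - a2 * h2 - 8 * (1 - \<tau>)\<^sup>2 * \<eta>\<^sup>2 / \<tau>\<^sup>2 * nE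
          - \<eta>\<^sup>2 * (4 * L\<^sup>2 - (12 / \<tau>\<^sup>2 + 10) * (\<Theta> + \<Theta>h) / \<kappa>) * nXX
          + (12 / \<tau>\<^sup>2 + 10) * \<eta>\<^sup>2 * dk / \<kappa>" (is "?l \<le> ?r")
proof -
  define K where "K = \<eta>\<^sup>2 / \<kappa> * (12 / \<tau>\<^sup>2 + 10)"
  have K0: "K \<ge> 0" using kap by (simp add: K_def)
  have kK: "\<kappa> * K \<ge> 0" using kap K0 by simp
  have C0: "\<eta>\<^sup>2*(4/\<tau>\<^sup>2+16/\<tau>+1/4) \<ge> 0" using tau by simp
  define T1 where "T1 = (Qv - a1 * h1 - a2 * h2 - 4*L\<^sup>2*\<eta>\<^sup>2*nXX) - (Aq + (1-\<tau>) * ip - \<eta>\<^sup>2*(4/\<tau>\<^sup>2+16/\<tau>+1/4)*(1-\<tau>)\<^sup>2*nE)"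
  define T2 where "T2 = \<kappa> * K * (D - s)"
  define T3 where "T3 = \<eta>\<^sup>2*(4/\<tau>\<^sup>2+16/\<tau>+1/4) * (s - (1-\<tau>)\<^sup>2 * nE)"
  define T4 where "T4 = K * ((1-\<kappa>) * Dp + \<Theta> * nXX + \<Theta>h * nXpp + dk - D)"
  have t1: "T1 \<ge> 0" using core by (simp add: T1_def)
  have t2: "T2 \<ge> 0" using kK S by (simp add: T2_def)
  have t3: "T3 \<ge> 0" using C0 J by (simp add: T3_def)
  have t4: "T4 \<ge> 0" using K0 R by (simp add: T4_def)
  have id: "?r - ?l = T1 + T2 + T3 + T4"
    unfolding T1_def T2_def T3_def T4_def K_def using tau kap
    by (simp add: field_simps power2_eq_square)
  have "0 \<le> ?r - ?l" unfolding id using t1 t2 t3 t4 by linarith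
  then show ?thesis by (simp only: diff_ge_0_iff_ge)
qed

lemma L2M_int: "L2M M f \<Longrightarrow> integrable M (\<lambda>\<omega>. (norm (f \<omega>))\<^sup>2)"
  by (simp add: L2M_def)

lemma L2M_meas: "L2M M f \<Longrightarrow> f \<in> borel_measurable M"
  by (simp add: L2M_def)

lemma filt_lift:
  assumes filt: "\<forall>k. subalgebra M (F k) \<and> sets (F k) \<subseteq> sets (F (Suc k))"
    and jk: "j \<le> k" and h: "h \<in> measurable (F j) N"
  shows "h \<in> measurable (F k) N"
proof -
  have s: "sets (F j) \<subseteq> sets (F k)"
    by (rule lift_Suc_mono_le[of "\<lambda>k. sets (F k)", OF _ jk]) (use filt in blast)
  have "space (F j) = space M" "space (F k) = space M" using filt by (auto simp: subalgebra_def)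
  then have "subalgebra (F k) (F j)" using s by (simp add: subalgebra_def)
  then show ?thesis using h by (rule measurable_from_subalg)
qed

lemma filt_M:
  assumes filt: "\<forall>k. subalgebra M (F k) \<and> sets (F k) \<subseteq> sets (F (Suc k))"
    and h: "h \<in> measurable (F k) N"
  shows "h \<in> measurable M N"
  using filt h measurable_from_subalg by blast

lemma nsq_diff_scale:
  fixes a v :: "'a::real_inner"
  shows "(norm (a - c *\<^sub>R v))\<^sup>2 = (norm a)\<^sup>2 - 2*c*inner a v + c\<^sup>2*(norm v)\<^sup>2"
  unfolding power2_norm_eq_inner by (simp add: inner_simps inner_commute algebra_simps power2_eq_square)

lemma (in sigma_finite_subalgebra) CE_jensen_sq:
  fixes e Eb :: "'a \<Rightarrow> 'b::euclidean_space"
  assumes Em: "Eb \<in> borel_measurable F" and E2: "L2M M Eb" and e2: "L2M M e"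
    and ce: "\<forall>b\<in>Basis. AE \<omega> in M. real_cond_exp M F (\<lambda>\<omega>. e \<omega> \<bullet> b) \<omega> = c * (Eb \<omega> \<bullet> b)"
  shows "AE \<omega> in M. c\<^sup>2 * (norm (Eb \<omega>))\<^sup>2 \<le> real_cond_exp M F (\<lambda>\<omega>. (norm (e \<omega>))\<^sup>2) \<omega>"
proof -
  have [measurable]: "e \<in> borel_measurable M" using e2 by (simp add: L2M_def)
  have [measurable]: "Eb \<in> borel_measurable M" using E2 by (simp add: L2M_def)
  have ie: "integrable M (\<lambda>\<omega>. (norm (e \<omega>))\<^sup>2)" using e2 by (simp add: L2M_def)
  have iE: "integrable M (\<lambda>\<omega>. c\<^sup>2 * (norm (Eb \<omega>))\<^sup>2)" using E2 by (simp add: L2M_def)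
  have iI: "integrable M (\<lambda>\<omega>. inner (Eb \<omega>) (e \<omega>))" by (rule L2M_inner[OF E2 e2])
  have iI2: "integrable M (\<lambda>\<omega>. (-2*c) * inner (Eb \<omega>) (e \<omega>))" using iI by simp
  have fe: "(\<lambda>\<omega>. (norm (e \<omega> - c *\<^sub>R Eb \<omega>))\<^sup>2)
      = (\<lambda>\<omega>. ((norm (e \<omega>))\<^sup>2 + (-2*c) * inner (Eb \<omega>) (e \<omega>)) + c\<^sup>2 * (norm (Eb \<omega>))\<^sup>2)"
    by (rule ext) (simp add: nsq_diff_scale inner_commute)
  have pos: "AE \<omega> in M. 0 \<le> real_cond_exp M F (\<lambda>\<omega>. (norm (e \<omega> - c *\<^sub>R Eb \<omega>))\<^sup>2) \<omega>"
    by (rule real_cond_exp_pos) (auto, measurable)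
  have a1: "AE \<omega> in M. real_cond_exp M F (\<lambda>\<omega>. ((norm (e \<omega>))\<^sup>2 + (-2*c) * inner (Eb \<omega>) (e \<omega>)) + c\<^sup>2 * (norm (Eb \<omega>))\<^sup>2) \<omega>
     = real_cond_exp M F (\<lambda>\<omega>. (norm (e \<omega>))\<^sup>2 + (-2*c) * inner (Eb \<omega>) (e \<omega>)) \<omega> + real_cond_exp M F (\<lambda>\<omega>. c\<^sup>2 * (norm (Eb \<omega>))\<^sup>2) \<omega>"
    by (rule real_cond_exp_add) (use ie iI2 iE in auto)
  have a2: "AE \<omega> in M. real_cond_exp M F (\<lambda>\<omega>. (norm (e \<omega>))\<^sup>2 + (-2*c) * inner (Eb \<omega>) (e \<omega>)) \<omega>
     = real_cond_exp M F (\<lambda>\<omega>. (norm (e \<omega>))\<^sup>2) \<omega> + real_cond_exp M F (\<lambda>\<omega>. (-2*c) * inner (Eb \<omega>) (e \<omega>)) \<omega>"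
    by (rule real_cond_exp_add) (use ie iI2 in auto)
  have a3: "AE \<omega> in M. real_cond_exp M F (\<lambda>\<omega>. (-2*c) * inner (Eb \<omega>) (e \<omega>)) \<omega>
     = (-2*c) * real_cond_exp M F (\<lambda>\<omega>. inner (Eb \<omega>) (e \<omega>)) \<omega>"
    by (rule real_cond_exp_cmult) (rule iI)
  have a4: "AE \<omega> in M. real_cond_exp M F (\<lambda>\<omega>. inner (Eb \<omega>) (e \<omega>)) \<omega> = c * inner (Eb \<omega>) (Eb \<omega>)"
    by (rule CE_inner[OF Em E2 e2 ce])
  have a5: "AE \<omega> in M. real_cond_exp M F (\<lambda>\<omega>. c\<^sup>2 * (norm (Eb \<omega>))\<^sup>2) \<omega> = c\<^sup>2 * (norm (Eb \<omega>))\<^sup>2"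
  proof -
    have [measurable]: "Eb \<in> borel_measurable F" by (rule Em)
    show ?thesis by (rule real_cond_exp_F_meas[OF iE]) measurable
  qed
  show ?thesis
  proof (rule AE_mp[OF AE_conjI[OF pos AE_conjI[OF a1 AE_conjI[OF a2 AE_conjI[OF a3 AE_conjI[OF a4 a5]]]]]], rule AE_I2, intro impI)
    fix \<omega> assume h: "0 \<le> real_cond_exp M F (\<lambda>\<omega>. (norm (e \<omega> - c *\<^sub>R Eb \<omega>))\<^sup>2) \<omega> \<and>
      real_cond_exp M F (\<lambda>\<omega>. ((norm (e \<omega>))\<^sup>2 + (-2*c) * inner (Eb \<omega>) (e \<omega>)) + c\<^sup>2 * (norm (Eb \<omega>))\<^sup>2) \<omega>
     = real_cond_exp M F (\<lambda>\<omega>. (norm (e \<omega>))\<^sup>2 + (-2*c) * inner (Eb \<omega>) (e \<omega>)) \<omega> + real_cond_exp M F (\<lambda>\<omega>. c\<^sup>2 * (norm (Eb \<omega>))\<^sup>2) \<omega> \<and>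
      real_cond_exp M F (\<lambda>\<omega>. (norm (e \<omega>))\<^sup>2 + (-2*c) * inner (Eb \<omega>) (e \<omega>)) \<omega>
     = real_cond_exp M F (\<lambda>\<omega>. (norm (e \<omega>))\<^sup>2) \<omega> + real_cond_exp M F (\<lambda>\<omega>. (-2*c) * inner (Eb \<omega>) (e \<omega>)) \<omega> \<and>
      real_cond_exp M F (\<lambda>\<omega>. (-2*c) * inner (Eb \<omega>) (e \<omega>)) \<omega>
     = (-2*c) * real_cond_exp M F (\<lambda>\<omega>. inner (Eb \<omega>) (e \<omega>)) \<omega> \<and>
      real_cond_exp M F (\<lambda>\<omega>. inner (Eb \<omega>) (e \<omega>)) \<omega> = c * inner (Eb \<omega>) (Eb \<omega>) \<and>
      real_cond_exp M F (\<lambda>\<omega>. c\<^sup>2 * (norm (Eb \<omega>))\<^sup>2) \<omega> = c\<^sup>2 * (norm (Eb \<omega>))\<^sup>2"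
    from h have h1: "0 \<le> real_cond_exp M F (\<lambda>\<omega>. (norm (e \<omega> - c *\<^sub>R Eb \<omega>))\<^sup>2) \<omega>"
      and h2: "real_cond_exp M F (\<lambda>\<omega>. ((norm (e \<omega>))\<^sup>2 + (-2*c) * inner (Eb \<omega>) (e \<omega>)) + c\<^sup>2 * (norm (Eb \<omega>))\<^sup>2) \<omega>
     = real_cond_exp M F (\<lambda>\<omega>. (norm (e \<omega>))\<^sup>2 + (-2*c) * inner (Eb \<omega>) (e \<omega>)) \<omega> + real_cond_exp M F (\<lambda>\<omega>. c\<^sup>2 * (norm (Eb \<omega>))\<^sup>2) \<omega>"
      and h3: "real_cond_exp M F (\<lambda>\<omega>. (norm (e \<omega>))\<^sup>2 + (-2*c) * inner (Eb \<omega>) (e \<omega>)) \<omega>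
     = real_cond_exp M F (\<lambda>\<omega>. (norm (e \<omega>))\<^sup>2) \<omega> + real_cond_exp M F (\<lambda>\<omega>. (-2*c) * inner (Eb \<omega>) (e \<omega>)) \<omega>"
      and h4: "real_cond_exp M F (\<lambda>\<omega>. (-2*c) * inner (Eb \<omega>) (e \<omega>)) \<omega>
     = (-2*c) * real_cond_exp M F (\<lambda>\<omega>. inner (Eb \<omega>) (e \<omega>)) \<omega>"
      and h5: "real_cond_exp M F (\<lambda>\<omega>. inner (Eb \<omega>) (e \<omega>)) \<omega> = c * inner (Eb \<omega>) (Eb \<omega>)"
      and h6: "real_cond_exp M F (\<lambda>\<omega>. c\<^sup>2 * (norm (Eb \<omega>))\<^sup>2) \<omega> = c\<^sup>2 * (norm (Eb \<omega>))\<^sup>2"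
      by blast+
    define n where "n = (norm (Eb \<omega>))\<^sup>2"
    have ii: "inner (Eb \<omega>) (Eb \<omega>) = n" by (simp add: n_def power2_norm_eq_inner)
    have "real_cond_exp M F (\<lambda>\<omega>. (norm (e \<omega> - c *\<^sub>R Eb \<omega>))\<^sup>2) \<omega>
        = real_cond_exp M F (\<lambda>\<omega>. ((norm (e \<omega>))\<^sup>2 + (-2*c) * inner (Eb \<omega>) (e \<omega>)) + c\<^sup>2 * (norm (Eb \<omega>))\<^sup>2) \<omega>"
      by (simp only: fe)
    also have "\<dots> = (real_cond_exp M F (\<lambda>\<omega>. (norm (e \<omega>))\<^sup>2) \<omega> + (-2*c) * (c * n)) + c\<^sup>2 * n"
      unfolding h2 h3 h4 h5 h6 ii n_def by (rule refl)
    finally have "0 \<le> real_cond_exp M F (\<lambda>\<omega>. (norm (e \<omega>))\<^sup>2) \<omega> + (-2*c) * (c * n) + c\<^sup>2 * n"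
      using h1 by simp
    moreover have "(-2*c) * (c * n) + c\<^sup>2 * n = - (c\<^sup>2 * n)" by (simp add: power2_eq_square algebra_simps)
    ultimately show "c\<^sup>2 * (norm (Eb \<omega>))\<^sup>2 \<le> real_cond_exp M F (\<lambda>\<omega>. (norm (e \<omega>))\<^sup>2) \<omega>"
      unfolding n_def[symmetric] by linarith
  qed
qed

theorem mainTheorem11:
  fixes G :: "'a::euclidean_space \<Rightarrow> 'a" and T :: "'a \<Rightarrow> 'a set"
    and P :: "'z measure" and GG :: "'a \<Rightarrow> 'z \<Rightarrow> 'a" and n :: nat and Gi :: "nat \<Rightarrow> 'a \<Rightarrow> 'a"
    and \<sigma> L \<rho> \<eta> \<tau> \<kappa> \<Theta> \<Theta>h :: real and \<delta> :: "nat \<Rightarrow> real" and xs x0 \<xi>0 :: 'a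
    and M :: "'w measure" and F :: "nat \<Rightarrow> 'w measure"
    and x \<xi> St :: "nat \<Rightarrow> 'w \<Rightarrow> 'a" and \<Delta> :: "nat \<Rightarrow> 'w \<Rightarrow> real"
  assumes setting: "assmA_E G P GG \<sigma> L \<or> assmA_F G n Gi L"
    and G_lip: "\<forall>u v. (norm (G u - G v))\<^sup>2 \<le> L\<^sup>2 * (norm (u - v))\<^sup>2"
    and minty: "weak_minty G T \<rho> xs"
    and prob: "prob_space M"
    and filt: "\<forall>k. subalgebra M (F k) \<and> sets (F k) \<subseteq> sets (F (Suc k))"
    and adapt: "\<forall>k. x k \<in> borel_measurable (F k) \<and> St k \<in> borel_measurable (F (Suc k))
                   \<and> \<Delta> k \<in> borel_measurable (F (Suc k))"
    and integ: "\<forall>k. integrable M (\<lambda>\<omega>. (norm (x k \<omega>))\<^sup>2) \<and> integrable M (\<lambda>\<omega>. (norm (St k \<omega>))\<^sup>2)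
                   \<and> integrable M (\<Delta> k)"
    and eta: "\<eta> > 0"
    and init: "\<forall>\<omega>\<in>space M. x 0 \<omega> = x0 \<and> \<xi> 0 \<omega> = \<xi>0" and xi0: "\<xi>0 \<in> T x0"
    and step: "\<forall>k. \<forall>\<omega>\<in>space M. x (Suc k) \<omega> \<in> resolvent \<eta> T (x k \<omega> - \<eta> *\<^sub>R St k \<omega>)"
    and xi_def: "\<forall>k. \<forall>\<omega>\<in>space M.
                   \<xi> (Suc k) \<omega> = (1 / \<eta>) *\<^sub>R (x k \<omega> - \<eta> *\<^sub>R St k \<omega> - x (Suc k) \<omega>)"
    and estim: "classB M F G x St \<Delta> \<tau> \<kappa> \<Theta> \<Theta>h \<delta>"
  shows "(\<forall>k. AE \<omega> in M.
            real_cond_exp M (F k) (Lk \<eta> \<tau> \<kappa> \<Theta>h G x \<xi> St \<Delta> xs (Suc k)) \<omega>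
            \<le> Lk \<eta> \<tau> \<kappa> \<Theta>h G x \<xi> St \<Delta> xs k \<omega>
              - (1/4 - 4 * \<rho> / \<eta> - L\<^sup>2 * \<eta> / 2 * (33 * \<eta> + 16 * \<rho>))
                  * (norm (yv \<eta> G x \<xi> k \<omega> - x k \<omega>))\<^sup>2
              - (1/4 - L\<^sup>2 * \<eta> / 2 * (33 * \<eta> + 16 * \<rho>))
                  * (norm (yv \<eta> G x \<xi> k \<omega> - x (k - 1) \<omega>))\<^sup>2
              - 8 * (1 - \<tau>)\<^sup>2 * \<eta>\<^sup>2 / \<tau>\<^sup>2 * (norm (eprev G x St k \<omega>))\<^sup>2
              - \<eta>\<^sup>2 * (4 * L\<^sup>2 - (12 / \<tau>\<^sup>2 + 10) * (\<Theta> + \<Theta>h) / \<kappa>)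
                  * (norm (x k \<omega> - x (k - 1) \<omega>))\<^sup>2
              + (12 / \<tau>\<^sup>2 + 10) * \<eta>\<^sup>2 * \<delta> k / \<kappa>)
         \<and> (\<forall>k. AE \<omega> in M.
              Lk \<eta> \<tau> \<kappa> \<Theta>h G x \<xi> St \<Delta> xs k \<omega> \<ge> 3/4 * (norm (yv \<eta> G x \<xi> k \<omega> - xs))\<^sup>2)"
proof -
  have tau: "0 < \<tau>" "\<tau> \<le> 1" using estim unfolding classB_def by blast+
  have kap: "0 < \<kappa>" "\<kappa> \<le> 1" using estim unfolding classB_def by blast+
  have Th0: "\<Theta> \<ge> 0" "\<Theta>h \<ge> 0" using estim unfolding classB_def by blast+
  have Dm: "\<And>k. \<Delta> k \<in> borel_measurable M" "\<And>k \<omega>. \<omega> \<in> space M \<Longrightarrow> \<Delta> k \<omega> \<ge> 0"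
    using estim unfolding classB_def by blast+
  have CEe: "\<And>k. \<forall>b\<in>Basis. AE \<omega> in M.
        real_cond_exp M (F k) (\<lambda>\<omega>. errv G x St k \<omega> \<bullet> b) \<omega> = (1 - \<tau>) * (eprev G x St k \<omega> \<bullet> b)"
    using estim unfolding classB_def by blast
  have CEn: "\<And>k. AE \<omega> in M.
        real_cond_exp M (F k) (\<lambda>\<omega>. (norm (errv G x St k \<omega>))\<^sup>2) \<omega> \<le> real_cond_exp M (F k) (\<Delta> k) \<omega>"
    using estim unfolding classB_def by blast
  have CED: "\<And>k. AE \<omega> in M.
        real_cond_exp M (F k) (\<Delta> k) \<omega> \<le> (1 - \<kappa>) * Dprev \<Delta> k \<omega>
           + \<Theta> * (norm (x k \<omega> - x (k - 1) \<omega>))\<^sup>2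
           + \<Theta>h * (norm (x (k - 1) \<omega> - x (k - 2) \<omega>))\<^sup>2 + \<delta> k"
    using estim unfolding classB_def by blast
  have rho: "\<rho> \<ge> 0" using minty unfolding weak_minty_def by blast
  have mty: "\<And>y v. v \<in> T y \<Longrightarrow> inner (G y + v) (y - xs) \<ge> - \<rho> * (norm (G y + v))\<^sup>2"
    using minty unfolding weak_minty_def by blast
  have fm: "finite_measure M" using prob by (simp add: prob_space_def)
  have sub: "\<And>k. subalgebra M (F k)" using filt by blast
  have Gl: "\<And>u v. norm (G u - G v) \<le> \<bar>L\<bar> * norm (u - v)"
  proof -
    fix u v
    have "(norm (G u - G v))\<^sup>2 \<le> (\<bar>L\<bar> * norm (u - v))\<^sup>2"
      using G_lip by (simp add: power_mult_distrib)
    then show "norm (G u - G v) \<le> \<bar>L\<bar> * norm (u - v)"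
      by (rule power2_le_imp_le) simp
  qed
  have Gm[measurable]: "G \<in> borel_measurable borel"
  proof (rule borel_measurable_continuous_onI)
    show "continuous_on UNIV G"
      by (rule lipschitz_on_continuous_on[of "\<bar>L\<bar>"]) (auto simp: lipschitz_on_def dist_norm Gl)
  qed
  have xF: "\<And>j k. j \<le> k \<Longrightarrow> x j \<in> borel_measurable (F k)"
    using filt_lift[OF filt] adapt by blast
  have StF: "\<And>j k. Suc j \<le> k \<Longrightarrow> St j \<in> borel_measurable (F k)"
    using filt_lift[OF filt] adapt by blast
  have xM[measurable]: "\<And>j. x j \<in> borel_measurable M"
    using filt_M[OF filt] adapt by blast
  have StM[measurable]: "\<And>j. St j \<in> borel_measurable M"
    using filt_M[OF filt] adapt by blast
  have DM[measurable]: "\<And>j. \<Delta> j \<in> borel_measurable M" by (rule Dm)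
  have L2x: "\<And>j. L2M M (x j)" unfolding L2M_def using integ xM by blast
  have L2St: "\<And>j. L2M M (St j)" unfolding L2M_def using integ StM by blast
  have L2Gx: "\<And>j. L2M M (\<lambda>\<omega>. G (x j \<omega>))" by (rule L2M_comp[OF fm Gm G_lip L2x])
  have err_eq: "\<And>j. errv G x St j = (\<lambda>\<omega>. St j \<omega> - (2 *\<^sub>R G (x j \<omega>) - G (x (j-1) \<omega>)))"
    by (rule ext) (simp add: errv_def)
  have L2err: "\<And>j. L2M M (errv G x St j)"
    unfolding err_eq by (intro L2M_diff L2M_scale L2St L2Gx)
  have errM[measurable]: "\<And>j. errv G x St j \<in> borel_measurable M"
    using L2err by (simp add: L2M_def)
  have eprev_eq: "\<And>k. eprev G x St k = (if k = 0 then (\<lambda>\<omega>. 0) else errv G x St (k - 1))"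
    by (auto simp: eprev_def fun_eq_iff)

  have part2: "\<forall>k. AE \<omega> in M. Lk \<eta> \<tau> \<kappa> \<Theta>h G x \<xi> St \<Delta> xs k \<omega> \<ge> 3/4 * (norm (yv \<eta> G x \<xi> k \<omega> - xs))\<^sup>2"
  proof (intro allI AE_I2)
    fix k \<omega> assume \<omega>: "\<omega> \<in> space M"
    have D0: "Dprev \<Delta> k \<omega> \<ge> 0" using Dm(2)[OF \<omega>] by (simp add: Dprev_def)
    have l: "3/4 * (norm (yv \<eta> G x \<xi> k \<omega> - xs))\<^sup>2 \<le> Qk \<eta> \<tau> G x \<xi> St xs k \<omega>
        + 8*(1-\<tau>)\<^sup>2*\<eta>\<^sup>2/\<tau>\<^sup>2*(norm (eprev G x St k \<omega>))\<^sup>2"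
      unfolding Qk_def by (rule lower_vec)
    have t1: "0 \<le> \<Theta>h * \<eta>\<^sup>2 / \<kappa> * (12 / \<tau>\<^sup>2 + 10) * (norm (x (k - 1) \<omega> - x (k - 2) \<omega>))\<^sup>2"
      using Th0 kap by simp
    have t2: "0 \<le> (1 - \<kappa>) * \<eta>\<^sup>2 / \<kappa> * (12 / \<tau>\<^sup>2 + 10) * Dprev \<Delta> k \<omega>"
      using kap D0 by simp
    show "Lk \<eta> \<tau> \<kappa> \<Theta>h G x \<xi> St \<Delta> xs k \<omega> \<ge> 3/4 * (norm (yv \<eta> G x \<xi> k \<omega> - xs))\<^sup>2"
      unfolding Lk_def using l t1 t2 by linarith
  qed

  have part1: "\<forall>k. AE \<omega> in M.
            real_cond_exp M (F k) (Lk \<eta> \<tau> \<kappa> \<Theta>h G x \<xi> St \<Delta> xs (Suc k)) \<omega>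
            \<le> Lk \<eta> \<tau> \<kappa> \<Theta>h G x \<xi> St \<Delta> xs k \<omega>
              - (1/4 - 4 * \<rho> / \<eta> - L\<^sup>2 * \<eta> / 2 * (33 * \<eta> + 16 * \<rho>))
                  * (norm (yv \<eta> G x \<xi> k \<omega> - x k \<omega>))\<^sup>2
              - (1/4 - L\<^sup>2 * \<eta> / 2 * (33 * \<eta> + 16 * \<rho>))
                  * (norm (yv \<eta> G x \<xi> k \<omega> - x (k - 1) \<omega>))\<^sup>2
              - 8 * (1 - \<tau>)\<^sup>2 * \<eta>\<^sup>2 / \<tau>\<^sup>2 * (norm (eprev G x St k \<omega>))\<^sup>2
              - \<eta>\<^sup>2 * (4 * L\<^sup>2 - (12 / \<tau>\<^sup>2 + 10) * (\<Theta> + \<Theta>h) / \<kappa>)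
                  * (norm (x k \<omega> - x (k - 1) \<omega>))\<^sup>2
              + (12 / \<tau>\<^sup>2 + 10) * \<eta>\<^sup>2 * \<delta> k / \<kappa>"
  proof
    fix k
    interpret S: finite_measure_subalgebra M "F k"
      using fm sub[of k] by (simp add: finite_measure_subalgebra_def finite_measure_subalgebra_axioms_def)
    define Yt where "Yt = (\<lambda>\<omega>. if k = 0 then x0 + \<eta> *\<^sub>R (G x0 + \<xi>0)
                              else x (k-1) \<omega> + \<eta> *\<^sub>R (G (x (k-1) \<omega>) - St (k-1) \<omega>))"
    define Pv where "Pv = (\<lambda>\<omega>. x k \<omega> - \<eta> *\<^sub>R (G (x k \<omega>) - G (x (k-1) \<omega>)))"
    define A where "A = (\<lambda>\<omega>. (norm (Pv \<omega> - xs))\<^sup>2 + 3/4*(norm (Pv \<omega> - x k \<omega>))\<^sup>2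
                 + 1/2*(norm (x k \<omega> - Yt \<omega>))\<^sup>2
                 + \<Theta>h * \<eta>\<^sup>2 / \<kappa> * (12 / \<tau>\<^sup>2 + 10) * (norm (x k \<omega> - x (k-1) \<omega>))\<^sup>2)"
    define B where "B = (\<lambda>\<omega>. (-2*\<eta>) *\<^sub>R (Pv \<omega> - xs) - (3/2*\<eta>) *\<^sub>R (Pv \<omega> - x k \<omega>)
                 + (2*\<eta>*(1-\<tau>)/\<tau>) *\<^sub>R (xs - Yt \<omega>))"
    define cc where "cc = 7/4*\<eta>\<^sup>2 + 8*(1-\<tau>)\<^sup>2*\<eta>\<^sup>2/\<tau>\<^sup>2"
    define dd where "dd = (1 - \<kappa>) * \<eta>\<^sup>2 / \<kappa> * (12 / \<tau>\<^sup>2 + 10)"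
    have xkF[measurable]: "x k \<in> borel_measurable (F k)" by (rule xF) simp
    have xk1F[measurable]: "x (k-1) \<in> borel_measurable (F k)" by (rule xF) simp
    have YtF[measurable]: "Yt \<in> borel_measurable (F k)"
    proof (cases k)
      case 0
      then show ?thesis unfolding Yt_def by simp
    next
      case (Suc j)
      have [measurable]: "St j \<in> borel_measurable (F k)" "x j \<in> borel_measurable (F k)"
        using Suc by (auto intro: StF xF)
      have "Yt = (\<lambda>\<omega>. x j \<omega> + \<eta> *\<^sub>R (G (x j \<omega>) - St j \<omega>))" unfolding Yt_def Suc by simp
      then show ?thesis by simp
    qed
    have EtF[measurable]: "eprev G x St k \<in> borel_measurable (F k)"
    proof (cases k)
      case 0
      then show ?thesis unfolding eprev_eq by simp
    next
      case (Suc j)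
      have [measurable]: "St j \<in> borel_measurable (F k)" "x j \<in> borel_measurable (F k)"
        "x (j-1) \<in> borel_measurable (F k)"
        using Suc by (auto intro: StF xF)
      have "eprev G x St k = (\<lambda>\<omega>. St j \<omega> - (2 *\<^sub>R G (x j \<omega>) - G (x (j-1) \<omega>)))"
        unfolding eprev_eq err_eq Suc by simp
      then show ?thesis by (simp only:) measurable
    qed
    have PvF[measurable]: "Pv \<in> borel_measurable (F k)" unfolding Pv_def by measurable
    have AF[measurable]: "A \<in> borel_measurable (F k)" unfolding A_def by measurable
    have BF[measurable]: "B \<in> borel_measurable (F k)" unfolding B_def by measurable
    have L2Yt: "L2M M Yt"
    proof (cases k)
      case 0
      then show ?thesis unfolding Yt_def by (simp add: L2M_const[OF fm])
    next
      case (Suc j)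
      have "Yt = (\<lambda>\<omega>. x j \<omega> + \<eta> *\<^sub>R (G (x j \<omega>) - St j \<omega>))" unfolding Yt_def Suc by simp
      then show ?thesis by (simp only:) (intro L2M_add L2M_scale L2M_diff L2x L2Gx L2St)
    qed
    have L2Et: "L2M M (eprev G x St k)"
      unfolding eprev_eq by (simp add: L2M_const[OF fm] L2err)
    have L2Pv: "L2M M Pv" unfolding Pv_def by (intro L2M_diff L2M_scale L2x L2Gx)
    have L2B: "L2M M B" unfolding B_def
      by (intro L2M_add L2M_diff L2M_scale L2Pv L2x L2Yt L2M_const[OF fm])
    have i1: "integrable M (\<lambda>\<omega>. (norm (Pv \<omega> - xs))\<^sup>2)"
      by (rule L2M_int[OF L2M_diff[OF L2Pv L2M_const[OF fm]]])
    have i2: "integrable M (\<lambda>\<omega>. (norm (Pv \<omega> - x k \<omega>))\<^sup>2)"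
      by (rule L2M_int[OF L2M_diff[OF L2Pv L2x]])
    have i3: "integrable M (\<lambda>\<omega>. (norm (x k \<omega> - Yt \<omega>))\<^sup>2)"
      by (rule L2M_int[OF L2M_diff[OF L2x L2Yt]])
    have i4: "integrable M (\<lambda>\<omega>. (norm (x k \<omega> - x (k-1) \<omega>))\<^sup>2)"
      by (rule L2M_int[OF L2M_diff[OF L2x L2x]])
    have iA: "integrable M A" unfolding A_def using i1 i2 i3 i4 by simp
    have L2e: "L2M M (errv G x St k)" by (rule L2err)
    have ie: "integrable M (\<lambda>\<omega>. (norm (errv G x St k \<omega>))\<^sup>2)" by (rule L2M_int[OF L2e])
    have iBe: "integrable M (\<lambda>\<omega>. inner (B \<omega>) (errv G x St k \<omega>))" by (rule L2M_inner[OF L2B L2e])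
    have iD: "integrable M (\<Delta> k)" using integ by blast
    have AM[measurable]: "A \<in> borel_measurable M" by (rule filt_M[OF filt AF])
    have BM[measurable]: "B \<in> borel_measurable M" by (rule filt_M[OF filt BF])

    have Yeq: "\<And>\<omega>. \<omega> \<in> space M \<Longrightarrow> yv \<eta> G x \<xi> k \<omega> = Yt \<omega>"
    proof -
      fix \<omega> assume \<omega>: "\<omega> \<in> space M"
      show "yv \<eta> G x \<xi> k \<omega> = Yt \<omega>"
      proof (cases k)
        case 0
        then show ?thesis using init \<omega> by (simp add: yv_def Yt_def)
      next
        case (Suc j)
        have xi: "\<xi> (Suc j) \<omega> = (1 / \<eta>) *\<^sub>R (x j \<omega> - \<eta> *\<^sub>R St j \<omega> - x (Suc j) \<omega>)"
          using xi_def \<omega> by blast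
        have "\<eta> *\<^sub>R \<xi> (Suc j) \<omega> = x j \<omega> - \<eta> *\<^sub>R St j \<omega> - x (Suc j) \<omega>"
          unfolding xi using eta by simp
        then show ?thesis unfolding Suc yv_def Yt_def
          by (simp add: scaleR_add_right scaleR_diff_right algebra_simps)
      qed
    qed
    have ynext: "\<And>\<omega>. \<omega> \<in> space M \<Longrightarrow> yv \<eta> G x \<xi> (Suc k) \<omega> = Pv \<omega> - \<eta> *\<^sub>R errv G x St k \<omega>"
    proof -
      fix \<omega> assume \<omega>: "\<omega> \<in> space M"
      have xi: "\<xi> (Suc k) \<omega> = (1 / \<eta>) *\<^sub>R (x k \<omega> - \<eta> *\<^sub>R St k \<omega> - x (Suc k) \<omega>)"
        using xi_def \<omega> by blast
      have h: "\<eta> *\<^sub>R \<xi> (Suc k) \<omega> = x k \<omega> - \<eta> *\<^sub>R St k \<omega> - x (Suc k) \<omega>"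
        unfolding xi using eta by simp
      have "yv \<eta> G x \<xi> (Suc k) \<omega> = x (Suc k) \<omega> + \<eta> *\<^sub>R G (x k \<omega>) + \<eta> *\<^sub>R \<xi> (Suc k) \<omega>"
        by (simp add: yv_def scaleR_add_right add.assoc)
      also have "\<dots> = x (Suc k) \<omega> + \<eta> *\<^sub>R G (x k \<omega>) + (x k \<omega> - \<eta> *\<^sub>R St k \<omega> - x (Suc k) \<omega>)"
        unfolding h ..
      also have "\<dots> = Pv \<omega> - \<eta> *\<^sub>R errv G x St k \<omega>"
        unfolding Pv_def errv_def scaleR_2 by (simp add: scaleR_diff_right scaleR_add_right algebra_simps)
      finally show "yv \<eta> G x \<xi> (Suc k) \<omega> = Pv \<omega> - \<eta> *\<^sub>R errv G x St k \<omega>" .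
    qed
    have Leq: "\<And>\<omega>. \<omega> \<in> space M \<Longrightarrow> Lk \<eta> \<tau> \<kappa> \<Theta>h G x \<xi> St \<Delta> xs (Suc k) \<omega>
        = A \<omega> + inner (B \<omega>) (errv G x St k \<omega>) + cc * (norm (errv G x St k \<omega>))\<^sup>2 + dd * \<Delta> k \<omega>"
    proof -
      fix \<omega> assume \<omega>: "\<omega> \<in> space M"
      define ev where "ev = errv G x St k \<omega>"
      define a1v where "a1v = Pv \<omega> - xs"
      define a2v where "a2v = Pv \<omega> - x k \<omega>"
      define a3v where "a3v = xs - Yt \<omega>"
      have s1: "Suc k - 1 = k" by simp
      have s2: "Suc k - 2 = k - 1" by simp
      have v1: "yv \<eta> G x \<xi> (Suc k) \<omega> - xs = a1v - \<eta> *\<^sub>R ev"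
        unfolding ynext[OF \<omega>] ev_def a1v_def by (simp add: algebra_simps)
      have v2: "yv \<eta> G x \<xi> (Suc k) \<omega> - x k \<omega> = a2v - \<eta> *\<^sub>R ev"
        unfolding ynext[OF \<omega>] ev_def a2v_def by (simp add: algebra_simps)
      have yp: "yprev \<eta> G x \<xi> (Suc k) \<omega> = Yt \<omega>" using Yeq[OF \<omega>] by (simp add: yprev_def)
      have ep: "eprev G x St (Suc k) \<omega> = ev" by (simp add: eprev_def ev_def)
      have dp: "Dprev \<Delta> (Suc k) \<omega> = \<Delta> k \<omega>" by (simp add: Dprev_def)
      have L1: "Lk \<eta> \<tau> \<kappa> \<Theta>h G x \<xi> St \<Delta> xs (Suc k) \<omega>
         = (norm (a1v - \<eta> *\<^sub>R ev))\<^sup>2 + 3/4 * (norm (a2v - \<eta> *\<^sub>R ev))\<^sup>2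
           + 1/2 * (norm (x k \<omega> - Yt \<omega>))\<^sup>2 + 2 * \<eta> * (1 - \<tau>) / \<tau> * inner ev a3v
           + \<Theta>h * \<eta>\<^sup>2 / \<kappa> * (12 / \<tau>\<^sup>2 + 10) * (norm (x k \<omega> - x (k - 1) \<omega>))\<^sup>2
           + dd * \<Delta> k \<omega>
           + 8 * (1 - \<tau>)\<^sup>2 * \<eta>\<^sup>2 / \<tau>\<^sup>2 * (norm ev)\<^sup>2"
        unfolding Lk_def Qk_def s1 s2 v1 v2 yp ep dp dd_def a3v_def by (rule refl)
      have ib: "inner (B \<omega>) ev = (-2*\<eta>) * inner a1v ev - (3/2*\<eta>) * inner a2v ev + (2*\<eta>*(1-\<tau>)/\<tau>) * inner a3v ev"
        unfolding B_def a1v_def[symmetric] a2v_def[symmetric] a3v_def[symmetric]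
        by (simp only: inner_add_left inner_diff_left inner_scaleR_left)
      have Ae: "A \<omega> = (norm a1v)\<^sup>2 + 3/4*(norm a2v)\<^sup>2 + 1/2*(norm (x k \<omega> - Yt \<omega>))\<^sup>2
                 + \<Theta>h * \<eta>\<^sup>2 / \<kappa> * (12 / \<tau>\<^sup>2 + 10) * (norm (x k \<omega> - x (k-1) \<omega>))\<^sup>2"
        unfolding A_def a1v_def a2v_def by (rule refl)
      have ic: "inner ev a3v = inner a3v ev" by (rule inner_commute)
      have "Lk \<eta> \<tau> \<kappa> \<Theta>h G x \<xi> St \<Delta> xs (Suc k) \<omega> = A \<omega> + inner (B \<omega>) ev + cc * (norm ev)\<^sup>2 + dd * \<Delta> k \<omega>"
        unfolding L1 ib Ae ic nsq_diff_scale cc_def by (simp add: algebra_simps)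
      then show "Lk \<eta> \<tau> \<kappa> \<Theta>h G x \<xi> St \<Delta> xs (Suc k) \<omega>
        = A \<omega> + inner (B \<omega>) (errv G x St k \<omega>) + cc * (norm (errv G x St k \<omega>))\<^sup>2 + dd * \<Delta> k \<omega>"
        unfolding ev_def .
    qed
    have xiT: "\<And>\<omega>. \<omega> \<in> space M \<Longrightarrow> \<xi> k \<omega> \<in> T (x k \<omega>)"
    proof -
      fix \<omega> assume \<omega>: "\<omega> \<in> space M"
      show "\<xi> k \<omega> \<in> T (x k \<omega>)"
      proof (cases k)
        case 0
        then show ?thesis using init \<omega> xi0 by simp
      next
        case (Suc j)
        have "x (Suc j) \<omega> \<in> resolvent \<eta> T (x j \<omega> - \<eta> *\<^sub>R St j \<omega>)" using step \<omega> by blast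
        then obtain v where v: "v \<in> T (x (Suc j) \<omega>)" and ve: "x j \<omega> - \<eta> *\<^sub>R St j \<omega> = x (Suc j) \<omega> + \<eta> *\<^sub>R v"
          unfolding resolvent_def by blast
        have xi: "\<xi> (Suc j) \<omega> = (1 / \<eta>) *\<^sub>R (x j \<omega> - \<eta> *\<^sub>R St j \<omega> - x (Suc j) \<omega>)"
          using xi_def \<omega> by blast
        have "\<xi> (Suc j) \<omega> = v" unfolding xi ve using eta by simp
        then show ?thesis using v Suc by simp
      qed
    qed

    define F1 where "F1 = (\<lambda>\<omega>. A \<omega> + inner (B \<omega>) (errv G x St k \<omega>) + cc * (norm (errv G x St k \<omega>))\<^sup>2 + dd * \<Delta> k \<omega>)"
    have F1M: "F1 \<in> borel_measurable M" unfolding F1_def by measurable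
    have LM: "Lk \<eta> \<tau> \<kappa> \<Theta>h G x \<xi> St \<Delta> xs (Suc k) \<in> borel_measurable M"
      using F1M measurable_cong[of M "Lk \<eta> \<tau> \<kappa> \<Theta>h G x \<xi> St \<Delta> xs (Suc k)" F1] Leq
      unfolding F1_def by blast
    have ae1: "AE \<omega> in M. real_cond_exp M (F k) (Lk \<eta> \<tau> \<kappa> \<Theta>h G x \<xi> St \<Delta> xs (Suc k)) \<omega>
        = real_cond_exp M (F k) F1 \<omega>"
      by (rule S.real_cond_exp_cong[OF _ LM F1M]) (rule AE_I2, simp add: Leq F1_def)
    have ae2: "AE \<omega> in M. real_cond_exp M (F k) F1 \<omega>
        = real_cond_exp M (F k) (\<lambda>\<omega>. A \<omega> + inner (B \<omega>) (errv G x St k \<omega>) + cc * (norm (errv G x St k \<omega>))\<^sup>2) \<omega>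
          + real_cond_exp M (F k) (\<lambda>\<omega>. dd * \<Delta> k \<omega>) \<omega>"
      unfolding F1_def by (rule S.real_cond_exp_add) (use iA iBe ie iD in auto)
    have ae3: "AE \<omega> in M. real_cond_exp M (F k) (\<lambda>\<omega>. A \<omega> + inner (B \<omega>) (errv G x St k \<omega>) + cc * (norm (errv G x St k \<omega>))\<^sup>2) \<omega>
        = real_cond_exp M (F k) (\<lambda>\<omega>. A \<omega> + inner (B \<omega>) (errv G x St k \<omega>)) \<omega>
          + real_cond_exp M (F k) (\<lambda>\<omega>. cc * (norm (errv G x St k \<omega>))\<^sup>2) \<omega>"
      by (rule S.real_cond_exp_add) (use iA iBe ie in auto)
    have ae4: "AE \<omega> in M. real_cond_exp M (F k) (\<lambda>\<omega>. A \<omega> + inner (B \<omega>) (errv G x St k \<omega>)) \<omega>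
        = real_cond_exp M (F k) A \<omega> + real_cond_exp M (F k) (\<lambda>\<omega>. inner (B \<omega>) (errv G x St k \<omega>)) \<omega>"
      by (rule S.real_cond_exp_add[OF iA iBe])
    have ae5: "AE \<omega> in M. real_cond_exp M (F k) A \<omega> = A \<omega>"
      by (rule S.real_cond_exp_F_meas[OF iA AF])
    have ae6: "AE \<omega> in M. real_cond_exp M (F k) (\<lambda>\<omega>. inner (B \<omega>) (errv G x St k \<omega>)) \<omega>
        = (1 - \<tau>) * inner (B \<omega>) (eprev G x St k \<omega>)"
      by (rule S.CE_inner[OF BF L2B L2e CEe])
    have ae7: "AE \<omega> in M. real_cond_exp M (F k) (\<lambda>\<omega>. cc * (norm (errv G x St k \<omega>))\<^sup>2) \<omega>
        = cc * real_cond_exp M (F k) (\<lambda>\<omega>. (norm (errv G x St k \<omega>))\<^sup>2) \<omega>"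
      by (rule S.real_cond_exp_cmult[OF ie])
    have ae8: "AE \<omega> in M. real_cond_exp M (F k) (\<lambda>\<omega>. dd * \<Delta> k \<omega>) \<omega> = dd * real_cond_exp M (F k) (\<Delta> k) \<omega>"
      by (rule S.real_cond_exp_cmult[OF iD])
    have ae9: "AE \<omega> in M. (1 - \<tau>)\<^sup>2 * (norm (eprev G x St k \<omega>))\<^sup>2
        \<le> real_cond_exp M (F k) (\<lambda>\<omega>. (norm (errv G x St k \<omega>))\<^sup>2) \<omega>"
      by (rule S.CE_jensen_sq[OF EtF L2Et L2e CEe])
    have aeAll: "AE \<omega> in M. real_cond_exp M (F k) (Lk \<eta> \<tau> \<kappa> \<Theta>h G x \<xi> St \<Delta> xs (Suc k)) \<omega>
        = A \<omega> + (1 - \<tau>) * inner (B \<omega>) (eprev G x St k \<omega>)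
          + cc * real_cond_exp M (F k) (\<lambda>\<omega>. (norm (errv G x St k \<omega>))\<^sup>2) \<omega>
          + dd * real_cond_exp M (F k) (\<Delta> k) \<omega>"
      using ae1 ae2 ae3 ae4 ae5 ae6 ae7 ae8 by eventually_elim simp
    show "AE \<omega> in M.
            real_cond_exp M (F k) (Lk \<eta> \<tau> \<kappa> \<Theta>h G x \<xi> St \<Delta> xs (Suc k)) \<omega>
            \<le> Lk \<eta> \<tau> \<kappa> \<Theta>h G x \<xi> St \<Delta> xs k \<omega>
              - (1/4 - 4 * \<rho> / \<eta> - L\<^sup>2 * \<eta> / 2 * (33 * \<eta> + 16 * \<rho>))
                  * (norm (yv \<eta> G x \<xi> k \<omega> - x k \<omega>))\<^sup>2
              - (1/4 - L\<^sup>2 * \<eta> / 2 * (33 * \<eta> + 16 * \<rho>))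
                  * (norm (yv \<eta> G x \<xi> k \<omega> - x (k - 1) \<omega>))\<^sup>2
              - 8 * (1 - \<tau>)\<^sup>2 * \<eta>\<^sup>2 / \<tau>\<^sup>2 * (norm (eprev G x St k \<omega>))\<^sup>2
              - \<eta>\<^sup>2 * (4 * L\<^sup>2 - (12 / \<tau>\<^sup>2 + 10) * (\<Theta> + \<Theta>h) / \<kappa>)
                  * (norm (x k \<omega> - x (k - 1) \<omega>))\<^sup>2
              + (12 / \<tau>\<^sup>2 + 10) * \<eta>\<^sup>2 * \<delta> k / \<kappa>"
      using aeAll ae9 CEn[of k] CED[of k] AE_space
    proof eventually_elim
      case (elim \<omega>)
      note CEL = elim(1) and J = elim(2) and Sx = elim(3) and R = elim(4) and \<omega> = elim(5)
      have lipw: "(norm (G (x k \<omega>) - G (x (k-1) \<omega>)))\<^sup>2 \<le> L\<^sup>2 * (norm (x k \<omega> - x (k-1) \<omega>))\<^sup>2"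
        using G_lip by blast
      have wq: "(1/\<eta>) *\<^sub>R (Yt \<omega> - x k \<omega>) + (G (x k \<omega>) - G (x (k-1) \<omega>)) = G (x k \<omega>) + \<xi> k \<omega>"
        unfolding Yeq[OF \<omega>, symmetric] yv_def using eta by (simp add: algebra_simps)
      have mw: "inner ((1/\<eta>) *\<^sub>R (Yt \<omega> - x k \<omega>) + (G (x k \<omega>) - G (x (k-1) \<omega>))) (x k \<omega> - xs)
          \<ge> - \<rho> * (norm ((1/\<eta>) *\<^sub>R (Yt \<omega> - x k \<omega>) + (G (x k \<omega>) - G (x (k-1) \<omega>))))\<^sup>2"
        unfolding wq by (rule mty[OF xiT[OF \<omega>]])
      note core = core_vec[where Yp = "yprev \<eta> G x \<xi> k \<omega>" and E = "eprev G x St k \<omega>", OF eta tau rho lipw mw]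
      note fin = final_scalar[OF eta tau(1) kap(1) core J Sx R]
      show ?case
        unfolding CEL Lk_def Qk_def Yeq[OF \<omega>] A_def B_def Pv_def cc_def dd_def
        by (rule fin)
    qed
  qed
  show ?thesis using part1 part2 by blast
qed

end
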